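(* Let $m$, $n$, $k$ be integers with $0 \le n < m \le N$ and $1 < k \le N$. Then \[ \int_{\Lambda} \frac{\prod_{i=1}^{n+1} y_i^2 \prod_{i=n+2}^{m} y_i}{y_1 - y_k}\, \Phi(y)\, dy = \begin{cases} 0 & \text{if } 2 \le k \le n+1,\\[2pt] \dfrac{1}{2}\displaystyle\int_{\Lambda} \prod_{i=1}^{n} y_i^2 \prod_{i=n+1}^{m} y_i \,\Phi(y)\, dy & \text{if } n+2 \le k \le m,\\[8pt] \displaystyle\int_{\Lambda} \prod_{i=1}^{n} y_i^2 \prod_{i=n+1}^{m} y_i \,\Phi(y)\, dy & \text{if } m+1 \le k \le N. \end{cases} \]
   Context: Let $N\ge 1$ be an integer and let $a,b,\rho$ be complex numbers with $\mathrm{Re}(a)>0$, $\mathrm{Re}(b)>0$ and $\mathrm{Re}(\rho) > -\min\{1/N,\ \mathrm{Re}(a)/(N-1),\ \mathrm{Re}(b)/(N-1)\}$ (replaced by $\mathrm{Re}(\rho)>-1$ when $N=1$). Let $\Lambda=(0,1)^N$ and for $y=(y_1,\dots,y_N)\in\Lambda$ put $\Phi(y)=\prod_{i=1}^N y_i^{a-1}(1-y_i)^{b-1}\prod_{1\le i<j\le N}|y_i-y_j|^{2\rho}$; $dy$ is Lebesgue measure on $\Lambda$. Empty products equal $1$. The parameters are assumed such that all integrals appearing converge absolutely. *)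

theory Defs
  imports "HOL-Analysis.Analysis"
begin

definition cube_measure :: "nat \<Rightarrow> (nat \<Rightarrow> real) measure" where
  "cube_measure N = Pi\<^sub>M {1..N} (\<lambda>_. restrict_space lborel {0<..<1::real})"

definition Phi :: "nat \<Rightarrow> complex \<Rightarrow> complex \<Rightarrow> complex \<Rightarrow> (nat \<Rightarrow> real) \<Rightarrow> complex" where
  "Phi N a b \<rho> y =
     (\<Prod>i\<in>{1..N}. complex_of_real (y i) powr (a - 1) * complex_of_real (1 - y i) powr (b - 1)) *
     (\<Prod>i\<in>{1..N}. \<Prod>j\<in>{i<..N}. complex_of_real \<bar>y i - y j\<bar> powr (2 * \<rho>))"

definition rho_admissible :: "nat \<Rightarrow> complex \<Rightarrow> complex \<Rightarrow> complex \<Rightarrow> bool" where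
  "rho_admissible N a b \<rho> =
     (if N = 1 then Re \<rho> > -1
      else Re \<rho> > - min (1 / real N) (min (Re a / (real N - 1)) (Re b / (real N - 1))))"

end

theory Submission imports Defs "HOL-Probability.Probability" begin

definition trn :: "nat \<Rightarrow> nat \<Rightarrow> nat \<Rightarrow> nat" where
  "trn a b i = (if i = a then b else if i = b then a else i)"

definition Tsw :: "nat \<Rightarrow> nat \<Rightarrow> nat \<Rightarrow> (nat \<Rightarrow> real) \<Rightarrow> (nat \<Rightarrow> real)" where
  "Tsw N a b y = (\<lambda>i\<in>{1..N}. y (trn a b i))"

definition mono :: "nat \<Rightarrow> (nat \<Rightarrow> nat) \<Rightarrow> (nat \<Rightarrow> real) \<Rightarrow> real" where
  "mono N e y = (\<Prod>i\<in>{1..N}. y i ^ e i)"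

lemma trn_trn[simp]: "trn a b (trn a b i) = i" by (simp add: trn_def)
lemma trn_in: "a \<in> S \<Longrightarrow> b \<in> S \<Longrightarrow> i \<in> S \<Longrightarrow> trn a b i \<in> S" by (simp add: trn_def)
lemma trn_inj: "trn a b i = trn a b j \<longleftrightarrow> i = j" by (metis trn_trn)

lemma prob_R: "prob_space (restrict_space lborel {0<..<1::real})"
  by (rule prob_spaceI) (simp add: emeasure_restrict_space space_restrict_space)

lemma distr_Tsw:
  assumes "a \<in> {1..N}" "b \<in> {1..N}"
  shows "distr (cube_measure N) (cube_measure N) (Tsw N a b) = cube_measure N"
proof -
  have "distr (Pi\<^sub>M {1..N} (\<lambda>_. restrict_space lborel {0<..<1::real})) (Pi\<^sub>M {1..N} (\<lambda>i. (\<lambda>_. restrict_space lborel {0<..<1::real}) (trn a b i)))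
     (\<lambda>\<omega>. \<lambda>n\<in>{1..N}. \<omega> (trn a b n)) = (Pi\<^sub>M {1..N} (\<lambda>i. (\<lambda>_. restrict_space lborel {0<..<1::real}) (trn a b i)))"
    by (rule distr_PiM_reindex) (use assms prob_R in \<open>auto simp: inj_on_def trn_inj intro: trn_in\<close>)
  then show ?thesis unfolding cube_measure_def Tsw_def by simp
qed

lemma meas_Tsw:
  assumes "a \<in> {1..N}" "b \<in> {1..N}"
  shows "Tsw N a b \<in> measurable (cube_measure N) (cube_measure N)"
  unfolding cube_measure_def Tsw_def
  by (rule measurable_restrict, rule measurable_component_singleton) (use assms in \<open>auto simp: trn_def\<close>)

lemma Tsw_Tsw:
  assumes "a \<in> {1..N}" "b \<in> {1..N}" "y \<in> space (cube_measure N)"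
  shows "Tsw N a b (Tsw N a b y) = y"
proof
  fix i
  have ext: "y \<in> extensional {1..N}" using assms(3) by (simp add: cube_measure_def space_PiM PiE_def)
  show "Tsw N a b (Tsw N a b y) i = y i"
    using ext assms trn_in[of a "{1..N}" b] by (cases "i \<in> {1..N}") (auto simp: Tsw_def extensional_def)
qed

lemma integral_Tsw:
  fixes g :: "(nat \<Rightarrow> real) \<Rightarrow> 'b::{banach, second_countable_topology}"
  assumes ab: "a \<in> {1..N}" "b \<in> {1..N}"
  shows "(\<integral>y. g (Tsw N a b y) \<partial>cube_measure N) = (\<integral>y. g y \<partial>cube_measure N)"
proof (cases "g \<in> borel_measurable (cube_measure N)")
  case True
  have "(\<integral>y. g y \<partial>cube_measure N) = (\<integral>y. g y \<partial>distr (cube_measure N) (cube_measure N) (Tsw N a b))"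
    using distr_Tsw[OF ab] by simp
  also have "\<dots> = (\<integral>y. g (Tsw N a b y) \<partial>cube_measure N)"
    by (rule integral_distr[OF meas_Tsw[OF ab] True])
  finally show ?thesis by simp
next
  case False
  have "(\<lambda>y. g (Tsw N a b y)) \<notin> borel_measurable (cube_measure N)"
  proof
    assume "(\<lambda>y. g (Tsw N a b y)) \<in> borel_measurable (cube_measure N)"
    then have "(\<lambda>y. g (Tsw N a b (Tsw N a b y))) \<in> borel_measurable (cube_measure N)"
      by (rule measurable_compose[OF meas_Tsw[OF ab]])
    moreover have "\<And>y. y \<in> space (cube_measure N) \<Longrightarrow> g (Tsw N a b (Tsw N a b y)) = g y"
      using Tsw_Tsw[OF ab] by simp
    ultimately have "g \<in> borel_measurable (cube_measure N)"
      using measurable_cong by (smt (verit))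
    with False show False by simp
  qed
  then show ?thesis using False
    by (metis borel_measurable_integrable not_integrable_integral_eq)
qed

lemma integrable_Tsw:
  fixes g :: "(nat \<Rightarrow> real) \<Rightarrow> 'b::{banach, second_countable_topology}"
  assumes ab: "a \<in> {1..N}" "b \<in> {1..N}" and g: "integrable (cube_measure N) g"
  shows "integrable (cube_measure N) (\<lambda>y. g (Tsw N a b y))"
proof -
  have "integrable (distr (cube_measure N) (cube_measure N) (Tsw N a b)) g"
    using distr_Tsw[OF ab] g by simp
  then show ?thesis
    using integrable_distr_eq[OF meas_Tsw[OF ab] borel_measurable_integrable[OF g]] by simp
qed

lemma Phi_zero:
  assumes "1 < k" "k \<le> N" "y 1 = y k"
  shows "Phi N a b \<rho> y = 0"
proof -
  have h: "(\<Prod>j\<in>{1<..N}. complex_of_real \<bar>y 1 - y j\<bar> powr (2 * \<rho>)) = 0"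
    using assms by (intro prod_zero) (auto intro!: bexI[of _ k])
  have "(\<Prod>i\<in>{1..N}. \<Prod>j\<in>{i<..N}. complex_of_real \<bar>y i - y j\<bar> powr (2 * \<rho>)) = 0"
    apply (rule prod_zero, simp)
    apply (rule bexI[of _ 1]) using h assms by auto
  then show ?thesis by (simp add: Phi_def)
qed

lemma prod_pairs_sym:
  fixes w :: "real \<Rightarrow> real \<Rightarrow> complex"
  assumes ab: "a \<in> {1..N}" "b \<in> {1..N}" and sym: "\<And>x z. w x z = w z x"
  shows "(\<Prod>i\<in>{1..N}. \<Prod>j\<in>{i<..N}. w (y (trn a b i)) (y (trn a b j))) =
         (\<Prod>i\<in>{1..N}. \<Prod>j\<in>{i<..N}. w (y i) (y j))"
proof -
  define P where "P = (SIGMA i:{1..N}. {i<..N})"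
  define \<phi> where "\<phi> = (\<lambda>(i,j). (min (trn a b i) (trn a b j), max (trn a b i) (trn a b j)))"
  have tin: "i \<in> {1..N} \<Longrightarrow> trn a b i \<in> {1..N}" for i using trn_in[OF ab] by blast
  have "(\<Prod>i\<in>{1..N}. \<Prod>j\<in>{i<..N}. w (y (trn a b i)) (y (trn a b j))) =
        (\<Prod>(i,j)\<in>P. w (y (trn a b i)) (y (trn a b j)))"
    unfolding P_def by (rule prod.Sigma) auto
  note eq0 = this
  have key: "\<phi> p \<in> P \<and> \<phi> (\<phi> p) = p \<and> (case \<phi> p of (i, j) \<Rightarrow> w (y i) (y j)) = (case p of (i, j) \<Rightarrow> w (y (trn a b i)) (y (trn a b j)))"
    if p: "p \<in> P" for p
  proof -
    obtain i j where ij: "p = (i,j)" "1 \<le> i" "i < j" "j \<le> N" using p by (auto simp: P_def)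
    have ne: "trn a b i \<noteq> trn a b j" using ij trn_inj by (metis less_irrefl)
    have ti: "trn a b i \<in> {1..N}" "trn a b j \<in> {1..N}" using ij tin by auto
    have 1: "\<phi> p \<in> P" using ne ti ij by (auto simp: \<phi>_def P_def min_def max_def)
    have 2: "\<phi> (\<phi> p) = p" using ne ij by (auto simp: \<phi>_def min_def max_def trn_inj)
    have 3: "(case \<phi> p of (i, j) \<Rightarrow> w (y i) (y j)) = (case p of (i, j) \<Rightarrow> w (y (trn a b i)) (y (trn a b j)))"
      using ij sym by (auto simp: \<phi>_def min_def max_def)
    show ?thesis using 1 2 3 by blast
  qed
  have mid: "(\<Prod>(i,j)\<in>P. w (y (trn a b i)) (y (trn a b j))) = (\<Prod>(i,j)\<in>P. w (y i) (y j))"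
    by (rule prod.reindex_bij_witness[of P \<phi> \<phi>]) (use key in auto)
  have eq2: "\<dots> = (\<Prod>i\<in>{1..N}. \<Prod>j\<in>{i<..N}. w (y i) (y j))"
    unfolding P_def by (rule prod.Sigma[symmetric]) auto
  show ?thesis using eq0 mid eq2 by simp
qed

lemma Phi_Tsw:
  assumes ab: "a \<in> {1..N}" "b \<in> {1..N}"
  shows "Phi N A B \<rho> (Tsw N a b y) = Phi N A B \<rho> y"
proof -
  have tin: "i \<in> {1..N} \<Longrightarrow> trn a b i \<in> {1..N}" for i using trn_in[OF ab] by blast
  have 1: "(\<Prod>i\<in>{1..N}. complex_of_real (Tsw N a b y i) powr (A - 1) * complex_of_real (1 - Tsw N a b y i) powr (B - 1))
     = (\<Prod>i\<in>{1..N}. complex_of_real (y i) powr (A - 1) * complex_of_real (1 - y i) powr (B - 1))"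
    by (rule prod.reindex_bij_witness[of _ "trn a b" "trn a b"]) (use ab in \<open>auto simp: Tsw_def trn_def\<close>)
  have "(\<Prod>i\<in>{1..N}. \<Prod>j\<in>{i<..N}. complex_of_real \<bar>Tsw N a b y i - Tsw N a b y j\<bar> powr (2 * \<rho>))
     = (\<Prod>i\<in>{1..N}. \<Prod>j\<in>{i<..N}. (\<lambda>x z. complex_of_real \<bar>x - z\<bar> powr (2 * \<rho>)) (y (trn a b i)) (y (trn a b j)))"
    by (intro prod.cong refl) (auto simp: Tsw_def)
  also have "\<dots> = (\<Prod>i\<in>{1..N}. \<Prod>j\<in>{i<..N}. (\<lambda>x z. complex_of_real \<bar>x - z\<bar> powr (2 * \<rho>)) (y i) (y j))"
    by (rule prod_pairs_sym[OF ab]) (simp add: abs_minus_commute)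
  finally show ?thesis using 1 by (simp add: Phi_def)
qed

lemma mono_Tsw:
  assumes ab: "a \<in> {1..N}" "b \<in> {1..N}"
  shows "mono N e (Tsw N a b y) = mono N (\<lambda>i. e (trn a b i)) y"
proof -
  have tin: "i \<in> {1..N} \<Longrightarrow> trn a b i \<in> {1..N}" for i using trn_in[OF ab] by blast
  show ?thesis unfolding mono_def
    by (rule prod.reindex_bij_witness[of _ "trn a b" "trn a b"]) (use ab in \<open>auto simp: Tsw_def trn_def\<close>)
qed

lemma mono_split:
  assumes ab: "a \<in> {1..N}" "b \<in> {1..N}" "a \<noteq> b"
  shows "mono N e y = y a ^ e a * y b ^ e b * (\<Prod>i\<in>{1..N} - {a,b}. y i ^ e i)"
proof -
  have "{1..N} = insert a (insert b ({1..N} - {a,b}))" using ab by auto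
  then have "mono N e y = (\<Prod>i\<in>insert a (insert b ({1..N} - {a,b})). y i ^ e i)"
    unfolding mono_def by simp
  also have "\<dots> = y a ^ e a * y b ^ e b * (\<Prod>i\<in>{1..N} - {a,b}. y i ^ e i)"
    using ab by simp
  finally show ?thesis .
qed

lemma mono_Tsw_split:
  assumes ab: "a \<in> {1..N}" "b \<in> {1..N}" "a \<noteq> b"
  shows "mono N e (Tsw N a b y) = y b ^ e a * y a ^ e b * (\<Prod>i\<in>{1..N} - {a,b}. y i ^ e i)"
proof -
  have "(\<Prod>i\<in>{1..N} - {a,b}. Tsw N a b y i ^ e i) = (\<Prod>i\<in>{1..N} - {a,b}. y i ^ e i)"
    by (rule prod.cong) (auto simp: Tsw_def trn_def)
  then show ?thesis using mono_split[OF ab, of e "Tsw N a b y"] ab by (simp add: Tsw_def trn_def)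
qed

lemma alg1: assumes "u \<noteq> (v::real)" shows "u^2 * v * r/(u-v) + v^2 * u * r/(v-u) = u * v * r"
proof -
  have d: "u - v \<noteq> 0" "v - u \<noteq> 0" using assms by auto
  have "v^2 * u * r/(v-u) = - (v^2 * u * r/(u-v))" by (metis minus_diff_eq minus_divide_right)
  then have "u^2 * v * r/(u-v) + v^2 * u * r/(v-u) = (u^2 * v * r - v^2 * u * r)/(u-v)" by (simp add: diff_divide_distrib)
  also have "u^2 * v * r - v^2 * u * r = (u * v * r)  *  (u - v)" by (simp add: algebra_simps power2_eq_square)
  finally show ?thesis using d by simp
qed
lemma alg2: assumes "u \<noteq> (v::real)" shows "u^2 * r/(u-v) + v^2 * r/(v-u) = u * r + v * r"
proof -
  have d: "u - v \<noteq> 0" "v - u \<noteq> 0" using assms by auto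
  have "v^2 * r/(v-u) = - (v^2 * r/(u-v))" by (metis minus_diff_eq minus_divide_right)
  then have "u^2 * r/(u-v) + v^2 * r/(v-u) = (u^2 * r - v^2 * r)/(u-v)" by (simp add: diff_divide_distrib)
  also have "u^2 * r - v^2 * r = (u * r + v * r)  *  (u - v)" by (simp add: algebra_simps power2_eq_square)
  finally show ?thesis using d by simp
qed

lemma mono_cong: "(\<And>i. i \<in> {1..N} \<Longrightarrow> e i = e' i) \<Longrightarrow> mono N e y = mono N e' y"
  unfolding mono_def by (rule prod.cong) auto

lemma relabel_integral:
  assumes ab: "a \<in> {1..N}" "b \<in> {1..N}" and e: "\<And>i. i \<in> {1..N} \<Longrightarrow> e' i = e (trn a b i)"
  shows "(\<integral>y. complex_of_real (mono N e' y) * Phi N A B \<rho> y \<partial>cube_measure N)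
       = (\<integral>y. complex_of_real (mono N e y) * Phi N A B \<rho> y \<partial>cube_measure N)"
proof -
  have "\<And>y. complex_of_real (mono N e' y) * Phi N A B \<rho> y
     = complex_of_real (mono N e (Tsw N a b y)) * Phi N A B \<rho> (Tsw N a b y)"
    using mono_Tsw[OF ab] Phi_Tsw[OF ab] mono_cong[where e=e' and e'="\<lambda>i. e (trn a b i)"] e by simp
  then show ?thesis using integral_Tsw[OF ab, of "\<lambda>y. complex_of_real (mono N e y) * Phi N A B \<rho> y"]
    by simp
qed

lemma relabel_integrable:
  assumes ab: "a \<in> {1..N}" "b \<in> {1..N}" and e: "\<And>i. i \<in> {1..N} \<Longrightarrow> e' i = e (trn a b i)"
    and int: "integrable (cube_measure N) (\<lambda>y. complex_of_real (mono N e y) * Phi N A B \<rho> y)"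
  shows "integrable (cube_measure N) (\<lambda>y. complex_of_real (mono N e' y) * Phi N A B \<rho> y)"
proof -
  have "\<And>y. complex_of_real (mono N e' y) * Phi N A B \<rho> y
     = complex_of_real (mono N e (Tsw N a b y)) * Phi N A B \<rho> (Tsw N a b y)"
    using mono_Tsw[OF ab] Phi_Tsw[OF ab] mono_cong[where e=e' and e'="\<lambda>i. e (trn a b i)"] e by simp
  then show ?thesis using integrable_Tsw[OF ab int] by simp
qed

lemma mono_blocks:
  assumes "p \<le> q" "q \<le> N"
  shows "(\<Prod>i\<in>{1..p}. y i ^ 2) * (\<Prod>i\<in>{p+1..q}. y i)
       = mono N (\<lambda>i. if i \<le> p then 2 else if i \<le> q then 1 else 0) y"
proof -
  let ?e = "\<lambda>i. if i \<le> p then 2 else if i \<le> q then 1 else (0::nat)"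
  have U: "{1..N} = {1..p} \<union> ({p+1..q} \<union> {q+1..N})" using assms by auto
  have d1: "{1..p} \<inter> ({p+1..q} \<union> {q+1..N}) = {}" using assms by auto
  have d2: "{p+1..q} \<inter> {q+1..N} = {}" by auto
  have "mono N ?e y = (\<Prod>i\<in>{1..p}. y i ^ ?e i) * ((\<Prod>i\<in>{p+1..q}. y i ^ ?e i) * (\<Prod>i\<in>{q+1..N}. y i ^ ?e i))"
    unfolding mono_def U using d1 d2 by (simp add: prod.union_disjoint)
  also have "(\<Prod>i\<in>{1..p}. y i ^ ?e i) = (\<Prod>i\<in>{1..p}. y i ^ 2)" by (rule prod.cong) auto
  also have "(\<Prod>i\<in>{p+1..q}. y i ^ ?e i) = (\<Prod>i\<in>{p+1..q}. y i)" by (rule prod.cong) auto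
  also have "(\<Prod>i\<in>{q+1..N}. y i ^ ?e i) = 1" using assms by (intro prod.neutral) auto
  finally show ?thesis by simp
qed

theorem lemma1:
  fixes N m n k :: nat and a b \<rho> :: complex
  assumes "N \<ge> 1" and "Re a > 0" and "Re b > 0" and "rho_admissible N a b \<rho>"
    and "n < m" and "m \<le> N" and "1 < k" and "k \<le> N"
    and "integrable (cube_measure N)
           (\<lambda>y. complex_of_real ((\<Prod>i\<in>{1..n+1}. y i ^ 2) * (\<Prod>i\<in>{n+2..m}. y i) / (y 1 - y k))
                 * Phi N a b \<rho> y)"
    and "integrable (cube_measure N)
           (\<lambda>y. complex_of_real ((\<Prod>i\<in>{1..n}. y i ^ 2) * (\<Prod>i\<in>{n+1..m}. y i)) * Phi N a b \<rho> y)"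
  shows "(\<integral>y. complex_of_real ((\<Prod>i\<in>{1..n+1}. y i ^ 2) * (\<Prod>i\<in>{n+2..m}. y i) / (y 1 - y k))
                 * Phi N a b \<rho> y \<partial>cube_measure N) =
    (if k \<le> n + 1 then 0
     else if k \<le> m then
       1 / 2 * (\<integral>y. complex_of_real ((\<Prod>i\<in>{1..n}. y i ^ 2) * (\<Prod>i\<in>{n+1..m}. y i)) * Phi N a b \<rho> y \<partial>cube_measure N)
     else (\<integral>y. complex_of_real ((\<Prod>i\<in>{1..n}. y i ^ 2) * (\<Prod>i\<in>{n+1..m}. y i)) * Phi N a b \<rho> y \<partial>cube_measure N))"
proof -
  define eF where "eF = (\<lambda>i::nat. if i \<le> n+1 then 2 else if i \<le> m then 1 else (0::nat))"
  define eG where "eG = (\<lambda>i::nat. if i \<le> n then 2 else if i \<le> m then 1 else (0::nat))"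
  have nn: "n + 1 + 1 = n + 2" by simp
  have hF: "\<And>y. (\<Prod>i\<in>{1..n+1}. y i ^ 2) * (\<Prod>i\<in>{n+2..m}. y i) = mono N eF y"
    using mono_blocks[of "n+1" m N] assms(5,6) unfolding eF_def nn by simp
  have hG: "\<And>y. (\<Prod>i\<in>{1..n}. y i ^ 2) * (\<Prod>i\<in>{n+1..m}. y i) = mono N eG y"
    using mono_blocks[of n m N] assms(5,6) unfolding eG_def by simp
  define Ph where "Ph = Phi N a b \<rho>"
  define f where "f = (\<lambda>y. complex_of_real (mono N eF y / (y 1 - y k)) * Ph y)"
  define g where "g = (\<lambda>y. complex_of_real (mono N eG y) * Ph y)"
  have intf: "integrable (cube_measure N) f" using assms(9) unfolding f_def Ph_def hF .
  have intg: "integrable (cube_measure N) g" using assms(10) unfolding g_def Ph_def hG .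
  have ab: "1 \<in> {1..N}" "k \<in> {1..N}" "(1::nat) \<noteq> k" using assms by auto
  have n1: "n + 1 \<in> {1..N}" using assms by auto
  define T where "T = Tsw N 1 k"
  have PhT: "\<And>y. Ph (T y) = Ph y" unfolding T_def Ph_def by (rule Phi_Tsw[OF ab(1,2)])
  have T1: "\<And>y. T y 1 = y k" and Tk: "\<And>y. T y k = y 1"
    using ab unfolding T_def Tsw_def trn_def by auto
  define R where "R = (\<lambda>y::nat\<Rightarrow>real. \<Prod>i\<in>{1..N}-{1,k}. y i ^ eF i)"
  have sF: "\<And>y. mono N eF y = y 1 ^ eF 1 * y k ^ eF k * R y"
    unfolding R_def by (rule mono_split[OF ab])
  have sFT: "\<And>y. mono N eF (T y) = y k ^ eF 1 * y 1 ^ eF k * R y"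
    unfolding R_def T_def by (rule mono_Tsw_split[OF ab])
  have fT: "\<And>y. f (T y) = complex_of_real (mono N eF (T y) / (y k - y 1)) * Ph y"
    unfolding f_def using T1 Tk PhT by simp
  have inv: "(\<integral>y. f y \<partial>cube_measure N) = (\<integral>y. f (T y) \<partial>cube_measure N)"
    unfolding T_def by (rule integral_Tsw[OF ab(1,2), symmetric])
  have intfT: "integrable (cube_measure N) (\<lambda>y. f (T y))"
    unfolding T_def by (rule integrable_Tsw[OF ab(1,2) intf])
  have e1: "eF 1 = 2" unfolding eF_def by simp
  have Rrest: "\<And>e y. (\<And>i. i \<in> {1..N} - {1,k} \<Longrightarrow> e i = eF i) \<Longrightarrow>
      (\<Prod>i\<in>{1..N}-{1,k}. y i ^ e i) = R y"
    unfolding R_def by (rule prod.cong) auto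
  have Phz: "\<And>y. y 1 = y k \<Longrightarrow> Ph y = 0" unfolding Ph_def using Phi_zero assms(7,8) by blast
  have main: "(\<integral>y. f y \<partial>cube_measure N) = (if k \<le> n + 1 then 0 else if k \<le> m then
       1 / 2 * (\<integral>y. g y \<partial>cube_measure N) else (\<integral>y. g y \<partial>cube_measure N))"
  proof (cases "k \<le> n + 1")
    case True
    have ek: "eF k = 2" using True unfolding eF_def by simp
    have "\<And>y. f (T y) = - f y"
    proof -
      fix y :: "nat \<Rightarrow> real"
      have A: "f y = complex_of_real (mono N eF y / (y 1 - y k)) * Ph y" unfolding f_def ..
      have B: "f (T y) = complex_of_real (mono N eF (T y) / (y k - y 1)) * Ph y" by (rule fT)
      have "y k ^ 2 * y 1 ^ 2 * R y / (y k - y 1) = - (y 1 ^ 2 * y k ^ 2 * R y / (y 1 - y k))"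
        by (metis minus_diff_eq minus_divide_right mult.commute)
      moreover have "f y = complex_of_real (y 1 ^ 2 * y k ^ 2 * R y / (y 1 - y k)) * Ph y"
        using A sF[of y] e1 ek by simp
      moreover have "f (T y) = complex_of_real (y k ^ 2 * y 1 ^ 2 * R y / (y k - y 1)) * Ph y"
        using B sFT[of y] e1 ek by simp
      ultimately show "f (T y) = - f y" by (metis mult_minus_left of_real_minus)
    qed
    then have "(\<integral>y. f y \<partial>cube_measure N) = - (\<integral>y. f y \<partial>cube_measure N)"
      using inv by simp
    then show ?thesis using True by simp
  next
    case False
    note nk = False
    show ?thesis
    proof (cases "k \<le> m")
      case True
      have ek: "eF k = 1" using True nk unfolding eF_def by simp
      define eH where "eH = eF(1:=1)"
      have sH: "\<And>y. mono N eH y = y 1 * y k * R y"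
        using mono_split[OF ab, of eH] Rrest[of eH] ab ek unfolding eH_def by auto
      have pt: "\<And>y. f y + f (T y) = complex_of_real (mono N eH y) * Ph y"
      proof -
        fix y :: "nat \<Rightarrow> real"
        have A: "f y = complex_of_real (mono N eF y / (y 1 - y k)) * Ph y" unfolding f_def ..
        have B: "f (T y) = complex_of_real (mono N eF (T y) / (y k - y 1)) * Ph y" by (rule fT)
        show "f y + f (T y) = complex_of_real (mono N eH y) * Ph y"
        proof (cases "y 1 = y k")
          case True then show ?thesis using Phz[OF True] unfolding A B by simp
        next
          case False
          then have d1: "y 1 - y k \<noteq> 0" and d2: "y k - y 1 \<noteq> 0" by auto
          have "y 1 ^ 2 * y k * R y / (y 1 - y k) + y k ^ 2 * y 1 * R y / (y k - y 1) = y 1 * y k * R y"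
            using alg1 alg2 False by blast
          then have "complex_of_real (y 1 ^ 2 * y k * R y / (y 1 - y k)) * Ph y + complex_of_real (y k ^ 2 * y 1 * R y / (y k - y 1)) * Ph y
              = complex_of_real (y 1 * y k * R y) * Ph y"
            by (metis distrib_right of_real_add)
          moreover have "f y = complex_of_real (y 1 ^ 2 * y k * R y / (y 1 - y k)) * Ph y"
            using A sF[of y] e1 ek by simp
          moreover have "f (T y) = complex_of_real (y k ^ 2 * y 1 * R y / (y k - y 1)) * Ph y"
            using B sFT[of y] e1 ek by simp
          ultimately show ?thesis unfolding sH by simp
        qed
      qed
      have "(\<integral>y. f y \<partial>cube_measure N) + (\<integral>y. f (T y) \<partial>cube_measure N) = (\<integral>y. f y + f (T y) \<partial>cube_measure N)"
        by (rule Bochner_Integration.integral_add[OF intf intfT, symmetric])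
      also have "\<dots> = (\<integral>y. complex_of_real (mono N eH y) * Ph y \<partial>cube_measure N)"
        unfolding pt ..
      also have "\<dots> = (\<integral>y. g y \<partial>cube_measure N)"
        unfolding g_def Ph_def
        by (rule relabel_integral[OF ab(1) n1]) (use nk True in \<open>auto simp: eH_def eF_def eG_def trn_def\<close>)
      finally have "2 * (\<integral>y. f y \<partial>cube_measure N) = (\<integral>y. g y \<partial>cube_measure N)"
        using inv by simp
      then show ?thesis using nk True by (simp add: mult.commute)
    next
      case False
      have ek: "eF k = 0" using False nk unfolding eF_def by simp
      define eH1 where "eH1 = eF(1:=1)"
      define eH2 where "eH2 = eF(1:=0, k:=1)"
      have sH1: "\<And>y. mono N eH1 y = y 1 * R y"
        using mono_split[OF ab, of eH1] Rrest[of eH1] ab ek unfolding eH1_def by auto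
      have sH2: "\<And>y. mono N eH2 y = y k * R y"
        using mono_split[OF ab, of eH2] Rrest[of eH2] ab ek unfolding eH2_def by auto
      have pt: "\<And>y. f y + f (T y) = complex_of_real (mono N eH1 y) * Ph y + complex_of_real (mono N eH2 y) * Ph y"
      proof -
        fix y :: "nat \<Rightarrow> real"
        have A: "f y = complex_of_real (mono N eF y / (y 1 - y k)) * Ph y" unfolding f_def ..
        have B: "f (T y) = complex_of_real (mono N eF (T y) / (y k - y 1)) * Ph y" by (rule fT)
        show "f y + f (T y) = complex_of_real (mono N eH1 y) * Ph y + complex_of_real (mono N eH2 y) * Ph y"
        proof (cases "y 1 = y k")
          case True then show ?thesis using Phz[OF True] unfolding A B by simp
        next
          case False
          then have d1: "y 1 - y k \<noteq> 0" and d2: "y k - y 1 \<noteq> 0" by auto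
          have "y 1 ^ 2 * R y / (y 1 - y k) + y k ^ 2 * R y / (y k - y 1) = y 1 * R y + y k * R y"
            using alg1 alg2 False by blast
          then have "complex_of_real (y 1 ^ 2 * R y / (y 1 - y k)) * Ph y + complex_of_real (y k ^ 2 * R y / (y k - y 1)) * Ph y
              = complex_of_real (y 1 * R y) * Ph y + complex_of_real (y k * R y) * Ph y"
            by (metis distrib_right of_real_add)
          moreover have "f y = complex_of_real (y 1 ^ 2 * R y / (y 1 - y k)) * Ph y"
            using A sF[of y] e1 ek by simp
          moreover have "f (T y) = complex_of_real (y k ^ 2 * R y / (y k - y 1)) * Ph y"
            using B sFT[of y] e1 ek by simp
          ultimately show ?thesis unfolding sH1 sH2 by simp
        qed
      qed
      have rel1: "\<And>i. i \<in> {1..N} \<Longrightarrow> eH1 i = eG (trn 1 (n+1) i)"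
        using nk False assms(5) by (auto simp: eH1_def eF_def eG_def trn_def)
      have rel2: "\<And>i. i \<in> {1..N} \<Longrightarrow> eH2 i = eH1 (trn 1 k i)"
        using nk False ab by (auto simp: eH1_def eH2_def eF_def trn_def)
      have intg': "integrable (cube_measure N) (\<lambda>y. complex_of_real (mono N eG y) * Phi N a b \<rho> y)"
        using intg unfolding g_def Ph_def .
      have int1: "integrable (cube_measure N) (\<lambda>y. complex_of_real (mono N eH1 y) * Ph y)"
        unfolding Ph_def using relabel_integrable[where e'=eH1 and e=eG, OF ab(1) n1 rel1 intg'] .
      have int2: "integrable (cube_measure N) (\<lambda>y. complex_of_real (mono N eH2 y) * Ph y)"
        unfolding Ph_def using relabel_integrable[where e'=eH2 and e=eH1, OF ab(1,2) rel2 int1[unfolded Ph_def]] .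
      have I1: "(\<integral>y. complex_of_real (mono N eH1 y) * Ph y \<partial>cube_measure N) = (\<integral>y. g y \<partial>cube_measure N)"
        unfolding g_def Ph_def by (rule relabel_integral[where e'=eH1 and e=eG, OF ab(1) n1 rel1])
      have I2: "(\<integral>y. complex_of_real (mono N eH2 y) * Ph y \<partial>cube_measure N) = (\<integral>y. complex_of_real (mono N eH1 y) * Ph y \<partial>cube_measure N)"
        unfolding Ph_def by (rule relabel_integral[where e'=eH2 and e=eH1, OF ab(1,2) rel2])
      have "(\<integral>y. f y \<partial>cube_measure N) + (\<integral>y. f (T y) \<partial>cube_measure N) = (\<integral>y. f y + f (T y) \<partial>cube_measure N)"
        by (rule Bochner_Integration.integral_add[OF intf intfT, symmetric])
      also have "\<dots> = (\<integral>y. complex_of_real (mono N eH1 y) * Ph y + complex_of_real (mono N eH2 y) * Ph y \<partial>cube_measure N)"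
        unfolding pt ..
      also have "\<dots> = (\<integral>y. complex_of_real (mono N eH1 y) * Ph y \<partial>cube_measure N) + (\<integral>y. complex_of_real (mono N eH2 y) * Ph y \<partial>cube_measure N)"
        by (rule Bochner_Integration.integral_add[OF int1 int2])
      finally have "2 * (\<integral>y. f y \<partial>cube_measure N) = 2 * (\<integral>y. g y \<partial>cube_measure N)"
        using inv I1 I2 by simp
      then show ?thesis using nk False by simp
    qed
  qed
  show ?thesis using main unfolding f_def g_def Ph_def hF hG .
qed

end
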